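(* Let $\mathbf X_I=(X_1,\dots,X_d)$ satisfy conditions (i) and (ii) below, let $I_1,\dots,I_p$ be a partition of $I$, let $1\le j<j'\le p$ and $\lambda_j,\lambda_{j'}>0$. Then $$\lim_{t\to\infty}P\big(M(I_j)>1-\lambda_j/t\,\big|\,M(I_{j'})>1-\lambda_{j'}/t\big)\,\lambda_{j'}\varepsilon_{\mathbf X_{I_{j'}}}(1)=\lim_{t\to\infty}P\big(M(I_{j'})>1-\lambda_{j'}/t\,\big|\,M(I_{j})>1-\lambda_{j}/t\big)\,\lambda_{j}\varepsilon_{\mathbf X_{I_{j}}}(1)$$ $$=\lambda_j\varepsilon_{\mathbf X_{I_j}}(1)+\lambda_{j'}\varepsilon_{\mathbf X_{I_{j'}}}(1)-\varepsilon_{\mathbf X_{I_j},\mathbf X_{I_{j'}}}(\lambda_j^{-1},\lambda_{j'}^{-1}).$$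
   Context: Let $d\ge 1$, $I=\{1,\dots,d\}$, and let $I_1,\dots,I_p$ ($1\le p\le d$) be a partition of $I$ into nonempty blocks of consecutive indices. Let $\mathbf X_I=(X_1,\dots,X_d)$ be a random vector with joint distribution function $F_{\mathbf X_I}$ and univariate marginal distribution functions $F_i$ such that: (i) $F_i(t)=\exp(-\sigma_i t^{-1/\eta})$ for $t>0$, $i=1,\dots,d$, for some constants $\sigma_i>0$ and $\eta\in(0,1]$; (ii) the function $\ell_{\mathbf X_I}(t_1,\dots,t_d)=-\ln F_{\mathbf X_I}(t_1,\dots,t_d)$, $(t_1,\dots,t_d)\in(0,\infty)^d$, is homogeneous of order $-1/\eta$, i.e. $\ell_{\mathbf X_I}(s\mathbf t)=s^{-1/\eta}\ell_{\mathbf X_I}(\mathbf t)$ for all $s>0$. For nonempty $J\subseteq I$, $M(J)=\max_{i\in J}F_i(X_i)$. For pairwise disjoint nonempty $J_1,\dots,J_q\subseteq I$ and $(\lambda_1,\dots,\lambda_q)\in(0,\infty)^q$, the extremal dependence function is $$\varepsilon_{\mathbf X_{J_1},\dots,\mathbf X_{J_q}}(\lambda_1,\dots,\lambda_q)=\frac{E\big(\max_{1\le k\le q}M(J_k)^{\lambda_k}\big)}{1-E\big(\max_{1\le k\le q}M(J_k)^{\lambda_k}\big)};$$ in particular $\varepsilon_{\mathbf X_J}(\lambda)=E(M(J)^{\lambda})/(1-E(M(J)^{\lambda}))$. *)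

theory Defs
  imports "HOL-Probability.Probability"
begin

definition marg_cdf :: "'a measure \<Rightarrow> (nat \<Rightarrow> 'a \<Rightarrow> real) \<Rightarrow> nat \<Rightarrow> real \<Rightarrow> real" where
  "marg_cdf P X i t = measure P {\<omega> \<in> space P. X i \<omega> \<le> t}"

definition joint_cdf :: "'a measure \<Rightarrow> (nat \<Rightarrow> 'a \<Rightarrow> real) \<Rightarrow> nat \<Rightarrow> (nat \<Rightarrow> real) \<Rightarrow> real" where
  "joint_cdf P X d t = measure P {\<omega> \<in> space P. \<forall>i\<in>{1..d}. X i \<omega> \<le> t i}"

definition ell :: "'a measure \<Rightarrow> (nat \<Rightarrow> 'a \<Rightarrow> real) \<Rightarrow> nat \<Rightarrow> (nat \<Rightarrow> real) \<Rightarrow> ereal" where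
  "ell P X d t = (if joint_cdf P X d t = 0 then \<infinity> else ereal (- ln (joint_cdf P X d t)))"

definition Mx :: "'a measure \<Rightarrow> (nat \<Rightarrow> 'a \<Rightarrow> real) \<Rightarrow> nat set \<Rightarrow> 'a \<Rightarrow> real" where
  "Mx P X J \<omega> = Max ((\<lambda>i. marg_cdf P X i (X i \<omega>)) ` J)"

definition ext_dep :: "'a measure \<Rightarrow> (nat \<Rightarrow> 'a \<Rightarrow> real) \<Rightarrow> (nat \<Rightarrow> nat set) \<Rightarrow> (nat \<Rightarrow> real) \<Rightarrow> nat set \<Rightarrow> real" where
  "ext_dep P X J lam K =
     (let e = (\<integral>\<omega>. Max ((\<lambda>k. Mx P X (J k) \<omega> powr lam k) ` K) \<partial>P) in e / (1 - e))"

definition cond_prob :: "'a measure \<Rightarrow> 'a set \<Rightarrow> 'a set \<Rightarrow> real" where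
  "cond_prob P A B = measure P (A \<inter> B) / measure P B"

end

theory Submission
  imports Defs
begin

lemma expect_cdf:
  fixes M :: "'a measure" and V :: "'a \<Rightarrow> real"
  assumes ps: "prob_space M" and Vm[measurable]: "V \<in> borel_measurable M"
    and Vb: "\<And>\<omega>. \<omega> \<in> space M \<Longrightarrow> 0 \<le> V \<omega> \<and> V \<omega> \<le> 1" and th: "\<theta> > 0"
    and cdf: "\<And>v. 0 < v \<Longrightarrow> v < 1 \<Longrightarrow> measure M {\<omega> \<in> space M. V \<omega> \<le> v} = v powr \<theta>"
  shows "(\<integral>\<omega>. V \<omega> \<partial>M) = \<theta> / (\<theta> + 1)"
proof -
  interpret prob_space M by (rule ps)
  interpret PS: pair_sigma_finite M lborel ..
  define f where "f \<omega> v = ennreal (indicator {0..<V \<omega>} v)" for \<omega> v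
  have 1: "(\<integral>\<^sup>+v. f \<omega> v \<partial>lborel) = ennreal (V \<omega>)" if "\<omega> \<in> space M" for \<omega>
    using Vb[OF that] unfolding f_def by (simp add: ennreal_indicator)
  have fm: "case_prod f \<in> borel_measurable (M \<Otimes>\<^sub>M lborel)"
    unfolding f_def indicator_def atLeastLessThan_iff by measurable
  have "(\<integral>\<^sup>+\<omega>. ennreal (V \<omega>) \<partial>M) = (\<integral>\<^sup>+\<omega>. (\<integral>\<^sup>+v. f \<omega> v \<partial>lborel) \<partial>M)"
    using 1 by (intro nn_integral_cong) auto
  also have "\<dots> = (\<integral>\<^sup>+v. (\<integral>\<^sup>+\<omega>. f \<omega> v \<partial>M) \<partial>lborel)"
    using PS.Fubini'[OF fm] by simp
  also have "\<dots> = (\<integral>\<^sup>+v. emeasure M {\<omega> \<in> space M. 0 \<le> v \<and> v < V \<omega>} \<partial>lborel)"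
  proof (intro nn_integral_cong)
    fix v :: real
    have "(\<integral>\<^sup>+\<omega>. f \<omega> v \<partial>M) = (\<integral>\<^sup>+\<omega>. indicator {\<omega> \<in> space M. 0 \<le> v \<and> v < V \<omega>} \<omega> \<partial>M)"
      unfolding f_def by (intro nn_integral_cong) (auto simp: indicator_def)
    also have "\<dots> = emeasure M {\<omega> \<in> space M. 0 \<le> v \<and> v < V \<omega>}"
      by (intro nn_integral_indicator) measurable
    finally show "(\<integral>\<^sup>+\<omega>. f \<omega> v \<partial>M) = emeasure M {\<omega> \<in> space M. 0 \<le> v \<and> v < V \<omega>}" .
  qed
  also have "\<dots> = (\<integral>\<^sup>+v. ennreal (indicator {0..1} v * (1 - v powr \<theta>)) \<partial>lborel)"
  proof (intro nn_integral_cong_AE)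
    show "AE v in lborel. emeasure M {\<omega> \<in> space M. 0 \<le> v \<and> v < V \<omega>} = ennreal (indicator {0..1} v * (1 - v powr \<theta>))"
      using AE_lborel_singleton[of 0]
    proof eventually_elim
      case (elim v)
      consider "v < 0" | "0 < v" "v < 1" | "v \<ge> 1" using elim by linarith
      then show ?case
      proof cases
        case 1
        then have "{\<omega> \<in> space M. 0 \<le> v \<and> v < V \<omega>} = {}" by auto
        then show ?thesis using 1 by simp
      next
        case 2
        have "{\<omega> \<in> space M. 0 \<le> v \<and> v < V \<omega>} = space M - {\<omega> \<in> space M. V \<omega> \<le> v}"
          using 2 by auto
        then have "emeasure M {\<omega> \<in> space M. 0 \<le> v \<and> v < V \<omega>} = ennreal (1 - v powr \<theta>)"
          using prob_compl[of "{\<omega> \<in> space M. V \<omega> \<le> v}"] cdf[OF 2] by (simp add: emeasure_eq_measure)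
        then show ?thesis using 2 by simp
      next
        case 3
        then have A: "{\<omega> \<in> space M. 0 \<le> v \<and> v < V \<omega>} = {}" using Vb by force
        have B: "indicator {0..1} v * (1 - v powr \<theta>) = (0::real)"
          using 3 by (cases "v = 1") auto
        show ?thesis unfolding A B by simp
      qed
    qed
  qed
  also have "\<dots> = ennreal (\<theta> / (\<theta> + 1))"
  proof -
    have h1: "((\<lambda>x. x powr \<theta>) has_integral (1 powr (\<theta>+1) / (\<theta>+1))) {0..1::real}"
      using th by (intro has_integral_powr_from_0) auto
    have h0: "((\<lambda>x. 1) has_integral (1::real)) {0..1::real}"
      using has_integral_const_real[of "1::real" 0 1] by simp
    have "((\<lambda>x. 1 - x powr \<theta>) has_integral (1 - 1 / (\<theta>+1))) {0..1::real}"
      using has_integral_diff[OF h0 h1] by simp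
    moreover have "1 - 1 / (\<theta>+1) = \<theta> / (\<theta>+1)" using th by (simp add: field_simps)
    ultimately have h: "((\<lambda>x. 1 - x powr \<theta>) has_integral (\<theta> / (\<theta>+1))) {0..1::real}" by simp
    have nn: "x \<in> {0..1} \<Longrightarrow> 0 \<le> 1 - x powr \<theta>" for x :: real
      using powr_le1[of \<theta> x] th by auto
    show ?thesis using nn_integral_has_integral_lebesgue[OF nn h] by simp
  qed
  finally have N: "(\<integral>\<^sup>+\<omega>. ennreal (V \<omega>) \<partial>M) = ennreal (\<theta> / (\<theta> + 1))" .
  have "(\<integral>\<omega>. V \<omega> \<partial>M) = enn2real (\<integral>\<^sup>+\<omega>. ennreal (V \<omega>) \<partial>M)"
    using Vb by (intro integral_eq_nn_integral) auto
  then show ?thesis using N th by simp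
qed

locale setting =
  fixes P :: "'a measure" and X :: "nat \<Rightarrow> 'a \<Rightarrow> real"
    and d :: nat and \<sigma> :: "nat \<Rightarrow> real" and \<eta> :: real
  assumes ps: "prob_space P"
    and d1: "d \<ge> 1"
    and rv: "\<And>i. i \<in> {1..d} \<Longrightarrow> X i \<in> borel_measurable P"
    and sigma: "\<And>i. i \<in> {1..d} \<Longrightarrow> \<sigma> i > 0"
    and eta: "0 < \<eta>" "\<eta> \<le> 1"
    and marg: "\<And>i t. i \<in> {1..d} \<Longrightarrow> t > 0 \<Longrightarrow>
                  marg_cdf P X i t = exp (- \<sigma> i * t powr (- 1 / \<eta>))"
    and homog: "\<And>t s. (\<forall>i\<in>{1..d}. t i > 0) \<Longrightarrow> s > 0 \<Longrightarrow>
                  ell P X d (\<lambda>i. s * t i) = ereal (s powr (- 1 / \<eta>)) * ell P X d t"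
begin

sublocale prob_space P by (rule ps)

definition U where "U i \<omega> = marg_cdf P X i (X i \<omega>)"
definition q where "q i u = (\<sigma> i / - ln u) powr \<eta>"
definition C where "C w = measure P {\<omega> \<in> space P. \<forall>i\<in>{1..d}. U i \<omega> \<le> w i}"

lemma marg_mono: "i \<in> {1..d} \<Longrightarrow> mono (marg_cdf P X i)"
  unfolding marg_cdf_def
proof (intro monoI)
  fix x y :: real assume i: "i \<in> {1..d}" and "x \<le> y"
  have m: "X i \<in> borel_measurable P" using rv i by auto
  show "measure P {\<omega> \<in> space P. X i \<omega> \<le> x} \<le> measure P {\<omega> \<in> space P. X i \<omega> \<le> y}"
    using \<open>x \<le> y\<close> m by (intro finite_measure_mono) auto
qed

lemma U_meas[measurable]: "i \<in> {1..d} \<Longrightarrow> U i \<in> borel_measurable P"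
proof -
  assume i: "i \<in> {1..d}"
  have "(\<lambda>\<omega>. marg_cdf P X i (X i \<omega>)) \<in> borel_measurable P"
    using measurable_compose[OF rv[OF i] borel_measurable_mono[OF marg_mono[OF i]]] by simp
  then show ?thesis unfolding U_def[abs_def] by simp
qed

lemma marg_bounds: "0 \<le> marg_cdf P X i t" "marg_cdf P X i t \<le> 1"
  unfolding marg_cdf_def by auto

lemma U_bounds: "0 \<le> U i \<omega>" "U i \<omega> \<le> 1"
  unfolding U_def using marg_bounds by auto

lemma q_pos: "i \<in> {1..d} \<Longrightarrow> 0 < u \<Longrightarrow> u < 1 \<Longrightarrow> q i u > 0"
  unfolding q_def using sigma[of i] by (auto intro!: divide_pos_pos)

lemma marg_q: assumes i: "i \<in> {1..d}" and u: "0 < u" "u < 1"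
  shows "marg_cdf P X i (q i u) = u"
proof -
  have l: "- ln u > 0" using u by simp
  have s: "\<sigma> i > 0" using sigma i by auto
  have "q i u powr (-1/\<eta>) = (\<sigma> i / - ln u) powr (\<eta> * (-1/\<eta>))"
    unfolding q_def by (simp add: powr_powr)
  also have "\<dots> = (- ln u) / \<sigma> i" using eta l s by (simp add: powr_minus_divide)
  finally have "q i u powr (-1/\<eta>) = (- ln u) / \<sigma> i" .
  then show ?thesis using marg[OF i q_pos[OF i u]] s u by simp
qed

lemma marg_nonpos: assumes i: "i \<in> {1..d}" and x: "x \<le> 0"
  shows "marg_cdf P X i x = 0"
proof (rule ccontr)
  assume "marg_cdf P X i x \<noteq> 0"
  then have m: "marg_cdf P X i x > 0" using marg_bounds[of i x] by auto
  define u where "u = min (marg_cdf P X i x) 1 / 2"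
  have u: "0 < u" "u < 1" "u < marg_cdf P X i x" using m unfolding u_def by auto
  have "marg_cdf P X i x \<le> marg_cdf P X i (q i u)"
    using monoD[OF marg_mono[OF i], of x "q i u"] q_pos[OF i u(1,2)] x by linarith
  then show False using marg_q[OF i u(1,2)] u by simp
qed

lemma marg_le_iff: assumes i: "i \<in> {1..d}" and u: "0 < u" "u < 1"
  shows "marg_cdf P X i x \<le> u \<longleftrightarrow> x \<le> q i u"
proof
  assume "x \<le> q i u"
  then show "marg_cdf P X i x \<le> u" using monoD[OF marg_mono[OF i], of x "q i u"] marg_q[OF i u] by linarith
next
  assume a: "marg_cdf P X i x \<le> u"
  show "x \<le> q i u"
  proof (rule ccontr)
    assume "\<not> x \<le> q i u"
    then have xq: "q i u < x" by simp
    have qp: "q i u > 0" using q_pos[OF i u] .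
    have "x powr (-1/\<eta>) < q i u powr (-1/\<eta>)"
      using eta qp xq by (intro powr_less_mono2_neg) auto
    then have "exp (- \<sigma> i * q i u powr (-1/\<eta>)) < exp (- \<sigma> i * x powr (-1/\<eta>))"
      using sigma[OF i] by simp
    moreover have "marg_cdf P X i x = exp (- \<sigma> i * x powr (-1/\<eta>))"
      using marg[OF i] qp xq by simp
    moreover have "u = exp (- \<sigma> i * q i u powr (-1/\<eta>))"
      using marg_q[OF i u] marg[OF i qp] by simp
    ultimately have "u < marg_cdf P X i x" by linarith
    then show False using a by simp
  qed
qed

lemma measure_U: assumes i: "i \<in> {1..d}" and u: "0 < u" "u \<le> 1"
  shows "measure P {\<omega> \<in> space P. U i \<omega> \<le> u} = u"
proof (cases "u = 1")
  case True
  then show ?thesis using U_bounds by (simp add: prob_space)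
next
  case False
  then have u1: "u < 1" using u by simp
  have "{\<omega> \<in> space P. U i \<omega> \<le> u} = {\<omega> \<in> space P. X i \<omega> \<le> q i u}"
    unfolding U_def using marg_le_iff[OF i u(1) u1] by auto
  then show ?thesis using marg_q[OF i u(1) u1] unfolding marg_cdf_def by simp
qed

end

lemma tendsto_bound:
  fixes f g :: "'b \<Rightarrow> real"
  assumes "eventually (\<lambda>x. \<bar>f x - L\<bar> \<le> g x) F" "(g \<longlongrightarrow> 0) F"
  shows "(f \<longlongrightarrow> L) F"
proof -
  have "((\<lambda>x. f x - L) \<longlongrightarrow> 0) F"
    using assms(2) by (rule Lim_null_comparison[rotated]) (use assms(1) in simp)
  from tendsto_add[OF this tendsto_const[of L]] show ?thesis by simp
qed
context setting begin

lemma q_scale: assumes i: "i \<in> {1..d}" and u: "0 < u" "u < 1" and c: "c > 0"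
  shows "q i (u powr c) = c powr (-\<eta>) * q i u"
proof -
  have "\<sigma> i / - ln (u powr c) = (1/c) * (\<sigma> i / - ln u)"
    using u c by (simp add: ln_powr)
  then have "q i (u powr c) = ((1/c) * (\<sigma> i / - ln u)) powr \<eta>" unfolding q_def by simp
  also have "\<dots> = (1/c) powr \<eta> * (\<sigma> i / - ln u) powr \<eta>"
    by (rule powr_mult)
  also have "\<dots> = (1/c) powr \<eta> * q i u" unfolding q_def ..
  also have "(1/c) powr \<eta> = c powr (-\<eta>)" using c by (simp add: powr_divide powr_minus_divide)
  finally show ?thesis .
qed

lemma U_sets: "i \<in> {1..d} \<Longrightarrow> {\<omega> \<in> space P. U i \<omega> \<le> u} \<in> sets P"
  using U_meas borel_measurable_iff_le by blast

lemma E_sets: "{\<omega> \<in> space P. \<forall>i\<in>{1..d}. U i \<omega> \<le> w i} \<in> sets P"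
  by (rule sets.sets_Collect_finite_All) (auto intro: U_sets)

lemma C_joint: assumes w: "\<forall>i\<in>{1..d}. 0 < w i \<and> w i < 1"
  shows "C w = joint_cdf P X d (\<lambda>i. q i (w i))"
proof -
  have "{\<omega> \<in> space P. \<forall>i\<in>{1..d}. U i \<omega> \<le> w i} = {\<omega> \<in> space P. \<forall>i\<in>{1..d}. X i \<omega> \<le> q i (w i)}"
    using w marg_le_iff unfolding U_def by auto
  then show ?thesis unfolding C_def joint_cdf_def by simp
qed

lemma joint_cdf_cong: "(\<And>i. i \<in> {1..d} \<Longrightarrow> t i = t' i) \<Longrightarrow> joint_cdf P X d t = joint_cdf P X d t'"
  unfolding joint_cdf_def by (metis (no_types, lifting))

lemma maxstab0: assumes w: "\<forall>i\<in>{1..d}. 0 < w i \<and> w i < 1" and c: "c > 0"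
  shows "C (\<lambda>i. w i powr c) = C w powr c"
proof -
  define t where "t = (\<lambda>i. q i (w i))"
  define s where "s = c powr (-\<eta>)"
  have s: "s > 0" using c unfolding s_def by simp
  have tp: "\<forall>i\<in>{1..d}. t i > 0" using w q_pos unfolding t_def by auto
  have w2: "\<forall>i\<in>{1..d}. 0 < w i powr c \<and> w i powr c < 1"
    using w c powr_less_mono2[of c _ 1] by auto
  have "C (\<lambda>i. w i powr c) = joint_cdf P X d (\<lambda>i. q i (w i powr c))"
    using C_joint[OF w2] by simp
  also have "\<dots> = joint_cdf P X d (\<lambda>i. s * t i)"
    using q_scale w c unfolding s_def t_def by (intro joint_cdf_cong) auto
  finally have C1: "C (\<lambda>i. w i powr c) = joint_cdf P X d (\<lambda>i. s * t i)" .
  have C0: "C w = joint_cdf P X d t" using C_joint[OF w] unfolding t_def by simp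
  have sp: "s powr (-1/\<eta>) = c" unfolding s_def using eta c by (simp add: powr_powr)
  have H: "ell P X d (\<lambda>i. s * t i) = ereal c * ell P X d t"
    using homog[OF tp s] sp by simp
  have nn: "joint_cdf P X d t' \<ge> 0" for t' unfolding joint_cdf_def by simp
  show ?thesis
  proof (cases "joint_cdf P X d t = 0")
    case True
    then have "ell P X d t = \<infinity>" unfolding ell_def by simp
    then have "ell P X d (\<lambda>i. s * t i) = \<infinity>" using H c by simp
    then have "joint_cdf P X d (\<lambda>i. s * t i) = 0" unfolding ell_def by (auto split: if_splits)
    then show ?thesis using C1 C0 True by simp
  next
    case False
    then have pos: "joint_cdf P X d t > 0" using nn[of t] by simp
    have "ell P X d t = ereal (- ln (joint_cdf P X d t))" using False unfolding ell_def by simp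
    then have E: "ell P X d (\<lambda>i. s * t i) = ereal (c * - ln (joint_cdf P X d t))" using H by simp
    then have nz: "joint_cdf P X d (\<lambda>i. s * t i) \<noteq> 0" unfolding ell_def by (auto split: if_splits)
    then have "ln (joint_cdf P X d (\<lambda>i. s * t i)) = c * ln (joint_cdf P X d t)"
      using E unfolding ell_def by simp
    then have "joint_cdf P X d (\<lambda>i. s * t i) = exp (c * ln (joint_cdf P X d t))"
      using nz nn by (metis exp_ln less_eq_real_def)
    then show ?thesis using C1 C0 pos by (simp add: powr_def)
  qed
qed

lemma C_mono: assumes "\<forall>i\<in>{1..d}. w i \<le> w' i"
  shows "C w \<le> C w'"
  unfolding C_def
proof (rule finite_measure_mono)
  show "{\<omega> \<in> space P. \<forall>i\<in>{1..d}. U i \<omega> \<le> w i} \<subseteq> {\<omega> \<in> space P. \<forall>i\<in>{1..d}. U i \<omega> \<le> w' i}"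
    using assms order_trans by blast
qed (rule E_sets)

lemma Lip: assumes w: "\<forall>i\<in>{1..d}. 0 < w i \<and> w i \<le> w' i \<and> w' i \<le> 1"
  shows "C w' \<le> C w + (\<Sum>i\<in>{1..d}. w' i - w i)"
proof -
  define E where "E w = {\<omega> \<in> space P. \<forall>i\<in>{1..d}. U i \<omega> \<le> w i}" for w
  define D where "D i = {\<omega> \<in> space P. U i \<omega> \<le> w' i} - {\<omega> \<in> space P. U i \<omega> \<le> w i}" for i
  have Ds: "i \<in> {1..d} \<Longrightarrow> D i \<in> sets P" for i unfolding D_def using U_sets by auto
  have Dm: "i \<in> {1..d} \<Longrightarrow> measure P (D i) = w' i - w i" for i
  proof -
    assume i: "i \<in> {1..d}"
    have "measure P (D i) = measure P {\<omega> \<in> space P. U i \<omega> \<le> w' i} - measure P {\<omega> \<in> space P. U i \<omega> \<le> w i}"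
      unfolding D_def
  proof (rule finite_measure_Diff)
    show "{\<omega> \<in> space P. U i \<omega> \<le> w i} \<subseteq> {\<omega> \<in> space P. U i \<omega> \<le> w' i}"
      using i w order_trans by blast
  qed (use i U_sets in auto)
    also have "\<dots> = w' i - w i"
    proof -
      have h: "0 < w i \<and> w i \<le> w' i \<and> w' i \<le> 1" using i w by blast
      show ?thesis using measure_U[OF i, of "w i"] measure_U[OF i, of "w' i"] h by simp
    qed
    finally show ?thesis .
  qed
  have sub: "E w' \<subseteq> E w \<union> (\<Union>i\<in>{1..d}. D i)"
    unfolding E_def D_def by auto
  have "C w' = measure P (E w')" unfolding C_def E_def by simp
  also have "\<dots> \<le> measure P (E w \<union> (\<Union>i\<in>{1..d}. D i))"
    using sub E_sets Ds unfolding E_def by (intro finite_measure_mono) auto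
  also have "\<dots> \<le> measure P (E w) + measure P (\<Union>i\<in>{1..d}. D i)"
    using E_sets Ds unfolding E_def by (intro measure_Un_le) auto
  also have "measure P (\<Union>i\<in>{1..d}. D i) \<le> (\<Sum>i\<in>{1..d}. measure P (D i))"
    using Ds by (intro measure_UNION_le) auto
  also have "(\<Sum>i\<in>{1..d}. measure P (D i)) = (\<Sum>i\<in>{1..d}. w' i - w i)"
    using Dm by simp
  finally show ?thesis unfolding C_def E_def by simp
qed

lemma Lip_abs: assumes w: "\<forall>i\<in>{1..d}. 0 < w i \<and> w i \<le> 1" and w': "\<forall>i\<in>{1..d}. 0 < w' i \<and> w' i \<le> 1"
  shows "\<bar>C w - C w'\<bar> \<le> (\<Sum>i\<in>{1..d}. \<bar>w i - w' i\<bar>)"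
proof -
  define m where "m = (\<lambda>i. min (w i) (w' i))"
  have m1: "\<forall>i\<in>{1..d}. 0 < m i \<and> m i \<le> w i \<and> w i \<le> 1" using w w' unfolding m_def by auto
  have m2: "\<forall>i\<in>{1..d}. 0 < m i \<and> m i \<le> w' i \<and> w' i \<le> 1" using w w' unfolding m_def by auto
  have a: "C w \<le> C m + (\<Sum>i\<in>{1..d}. w i - m i)" using Lip[OF m1] .
  have b: "C w' \<le> C m + (\<Sum>i\<in>{1..d}. w' i - m i)" using Lip[OF m2] .
  have a2: "C m \<le> C w" "C m \<le> C w'" using m1 m2 by (auto intro!: C_mono)
  have s1: "(\<Sum>i\<in>{1..d}. w i - m i) \<le> (\<Sum>i\<in>{1..d}. \<bar>w i - w' i\<bar>)"
    by (intro sum_mono) (auto simp: m_def)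
  have s2: "(\<Sum>i\<in>{1..d}. w' i - m i) \<le> (\<Sum>i\<in>{1..d}. \<bar>w i - w' i\<bar>)"
    by (intro sum_mono) (auto simp: m_def)
  show ?thesis using a b a2 s1 s2 by linarith
qed

lemma C_one: "C (\<lambda>_. 1) = 1"
  unfolding C_def using U_bounds by (simp add: prob_space)

end

context setting begin

lemma C_le1: "C w \<le> 1" unfolding C_def by simp
lemma C_nn: "0 \<le> C w" unfolding C_def by simp

lemma min_powr_bound:
  fixes x e c :: real
  assumes x: "0 < x" "x \<le> 1" and e: "0 < e" "e < 1" and c: "c > 0"
  shows "\<bar>min x (1 - e) powr c - x powr c\<bar> \<le> 1 - (1 - e) powr c"
proof (cases "x \<le> 1 - e")
  case True
  have "(1 - e) powr c \<le> 1" using e c by (intro powr_le1) auto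
  then show ?thesis using True by simp
next
  case False
  then have m: "min x (1 - e) = 1 - e" by simp
  have a: "(1 - e) powr c \<le> x powr c" using False e c by (intro powr_mono2) auto
  have b: "x powr c \<le> 1" using x c by (intro powr_le1) auto
  show ?thesis unfolding m using a b by simp
qed

lemma maxstab: assumes w: "\<forall>i\<in>{1..d}. 0 < w i \<and> w i \<le> 1" and c: "c > 0"
  shows "C (\<lambda>i. w i powr c) = C w powr c"
proof -
  define \<delta> where "\<delta> n = inverse (real (Suc n)) / 2" for n
  define wn where "wn n = (\<lambda>i. min (w i) (1 - \<delta> n))" for n
  have \<delta>: "0 < \<delta> n" "\<delta> n \<le> 1/2" for n
    unfolding \<delta>_def by (auto simp: field_simps)
  have \<delta>0: "\<delta> \<longlonglongrightarrow> 0"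
    unfolding \<delta>_def using tendsto_divide[OF LIMSEQ_inverse_real_of_nat tendsto_const[of 2]] by simp
  have wn: "\<forall>i\<in>{1..d}. 0 < wn n i \<and> wn n i < 1" for n
    using w \<delta>[of n] unfolding wn_def by auto
  have wn': "\<forall>i\<in>{1..d}. 0 < wn n i \<and> wn n i \<le> 1" for n
    using wn[of n] by auto
  have eq: "C (\<lambda>i. wn n i powr c) = C (wn n) powr c" for n
    using maxstab0[OF wn c] .
  have L1: "(\<lambda>n. C (wn n)) \<longlonglongrightarrow> C w"
  proof (rule tendsto_bound)
    show "\<forall>\<^sub>F n in sequentially. \<bar>C (wn n) - C w\<bar> \<le> real d * \<delta> n"
    proof (intro always_eventually allI)
      fix n
      have "\<bar>C (wn n) - C w\<bar> \<le> (\<Sum>i\<in>{1..d}. \<bar>wn n i - w i\<bar>)"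
        using Lip_abs[OF wn' w] .
      also have "\<dots> \<le> (\<Sum>i\<in>{1..d}. \<delta> n)"
      proof (intro sum_mono)
        fix i assume "i \<in> {1..d}"
        then have "0 < w i" "w i \<le> 1" using w by auto
        then show "\<bar>wn n i - w i\<bar> \<le> \<delta> n" using \<delta>[of n] unfolding wn_def min_def by auto
      qed
      finally show "\<bar>C (wn n) - C w\<bar> \<le> real d * \<delta> n" by simp
    qed
    show "(\<lambda>n. real d * \<delta> n) \<longlonglongrightarrow> 0"
      using tendsto_mult[OF tendsto_const[of "real d"] \<delta>0] by simp
  qed
  have wc: "\<forall>i\<in>{1..d}. 0 < w i powr c \<and> w i powr c \<le> 1"
    using w c powr_le1[of c] by fastforce
  have wnc: "\<forall>i\<in>{1..d}. 0 < wn n i powr c \<and> wn n i powr c \<le> 1" for n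
    using wn'[of n] c powr_le1[of c] by fastforce
  have L2: "(\<lambda>n. C (\<lambda>i. wn n i powr c)) \<longlonglongrightarrow> C (\<lambda>i. w i powr c)"
  proof (rule tendsto_bound)
    show "\<forall>\<^sub>F n in sequentially. \<bar>C (\<lambda>i. wn n i powr c) - C (\<lambda>i. w i powr c)\<bar>
            \<le> real d * (1 - (1 - \<delta> n) powr c)"
    proof (intro always_eventually allI)
      fix n
      have "\<bar>C (\<lambda>i. wn n i powr c) - C (\<lambda>i. w i powr c)\<bar> \<le> (\<Sum>i\<in>{1..d}. \<bar>wn n i powr c - w i powr c\<bar>)"
        using Lip_abs[OF wnc wc] .
      also have "\<dots> \<le> (\<Sum>i\<in>{1..d}. 1 - (1 - \<delta> n) powr c)"
        unfolding wn_def using w \<delta>[of n] c by (intro sum_mono min_powr_bound) auto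
      finally show "\<bar>C (\<lambda>i. wn n i powr c) - C (\<lambda>i. w i powr c)\<bar> \<le> real d * (1 - (1 - \<delta> n) powr c)"
        by simp
    qed
    have "(\<lambda>n. (1 - \<delta> n) powr c) \<longlonglongrightarrow> (1 - 0) powr c"
      by (intro tendsto_powr' tendsto_diff tendsto_const \<delta>0) auto
    then have "(\<lambda>n. real d * (1 - (1 - \<delta> n) powr c)) \<longlonglongrightarrow> real d * (1 - 1)"
      by (intro tendsto_mult tendsto_diff tendsto_const) auto
    then show "(\<lambda>n. real d * (1 - (1 - \<delta> n) powr c)) \<longlonglongrightarrow> 0" by simp
  qed
  have L3: "(\<lambda>n. C (wn n) powr c) \<longlonglongrightarrow> C w powr c"
    using c C_nn by (intro tendsto_powr' L1 tendsto_const) auto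
  have L2': "(\<lambda>n. C (\<lambda>i. wn n i powr c)) \<longlonglongrightarrow> C w powr c"
    using L3 eq by simp
  show ?thesis using LIMSEQ_unique[OF L2 L2'] .
qed

definition Cexp where "Cexp a s = C (\<lambda>i. exp (- s * a i))"

lemma exp_powr': "exp (x::real) powr c = exp (c * x)"
  by (simp add: powr_def)

lemma Cexp_scale: assumes a: "\<forall>i\<in>{1..d}. a i \<ge> 0" and s: "s > 0" and c: "c > 0"
  shows "Cexp a (c * s) = Cexp a s powr c"
proof -
  have w: "\<forall>i\<in>{1..d}. 0 < exp (- s * a i) \<and> exp (- s * a i) \<le> 1"
    using a s by auto
  have "(\<lambda>i. exp (- s * a i) powr c) = (\<lambda>i. exp (- (c * s) * a i))"
    by (simp add: exp_powr' mult.assoc)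
  then show ?thesis using maxstab[OF w c] unfolding Cexp_def by simp
qed

lemma Cexp_pos: assumes a: "\<forall>i\<in>{1..d}. a i \<ge> 0" and s: "s > 0"
  shows "Cexp a s > 0"
proof -
  define A where "A = (\<Sum>i\<in>{1..d}. a i)"
  have A: "A \<ge> 0" unfolding A_def using a by (intro sum_nonneg) auto
  define c where "c = 1 / (2 * (s * A + 1))"
  define B where "B = s * A"
  have B: "B \<ge> 0" unfolding B_def using A s by simp
  have c1: "c > 0" unfolding c_def using B B_def by simp
  have "c * (s * A) = B / (2 * (B + 1))" unfolding c_def B_def by simp
  also have "\<dots> < 1/2" using B pos_divide_less_eq[of "2*(B+1)" B "1/2"] by simp
  finally have c: "c > 0" "c * (s * A) < 1/2" using c1 by auto
  define s' where "s' = c * s"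
  have s': "s' > 0" unfolding s'_def using c s by simp
  have w: "\<forall>i\<in>{1..d}. 0 < exp (- s' * a i) \<and> exp (- s' * a i) \<le> 1"
    using a s' by auto
  have o: "\<forall>i\<in>{1..d}. 0 < (1::real) \<and> (1::real) \<le> 1" by simp
  have "\<bar>Cexp a s' - C (\<lambda>_. 1)\<bar> \<le> (\<Sum>i\<in>{1..d}. \<bar>exp (- s' * a i) - 1\<bar>)"
    unfolding Cexp_def using Lip_abs[OF w o] by simp
  also have "\<dots> \<le> (\<Sum>i\<in>{1..d}. s' * a i)"
  proof (intro sum_mono)
    fix i assume i: "i \<in> {1..d}"
    have "1 + (- s' * a i) \<le> exp (- s' * a i)" by (rule exp_ge_add_one_self)
    moreover have "exp (- s' * a i) \<le> 1" using w i by auto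
    ultimately show "\<bar>exp (- s' * a i) - 1\<bar> \<le> s' * a i" by simp
  qed
  also have "\<dots> = s' * A" unfolding A_def by (simp add: sum_distrib_left)
  finally have "\<bar>Cexp a s' - 1\<bar> \<le> s' * A" using C_one by simp
  then have pos: "Cexp a s' > 0" using c unfolding s'_def by (auto simp: mult.assoc)
  have "Cexp a ((1/c) * s') = Cexp a s' powr (1/c)"
    using Cexp_scale[OF a s', of "1/c"] c by simp
  moreover have "(1/c) * s' = s" unfolding s'_def using c by simp
  ultimately show ?thesis using pos by simp
qed

definition Theta where "Theta a = - ln (Cexp a 1)"

lemma Cexp_formula: assumes a: "\<forall>i\<in>{1..d}. a i \<ge> 0" and s: "s > 0"
  shows "Cexp a s = exp (- s * Theta a)"
proof -
  have "Cexp a (s * 1) = Cexp a 1 powr s" using Cexp_scale[OF a, of 1 s] s by simp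
  then show ?thesis using Cexp_pos[OF a, of 1] unfolding Theta_def by (simp add: powr_def)
qed

end

lemma exp_quad_bound:
  fixes x :: real assumes x: "x \<ge> 0"
  shows "0 \<le> exp (- x) - (1 - x)" "exp (- x) - (1 - x) \<le> x^2"
proof -
  show "0 \<le> exp (- x) - (1 - x)" using exp_ge_add_one_self[of "-x"] by simp
  have "1 + x \<le> exp x" by (rule exp_ge_add_one_self)
  then have "exp (- x) \<le> 1 / (1 + x)" using x by (simp add: exp_minus field_simps)
  also have "1 / (1 + x) = (1 - x) + x^2 / (1 + x)" using x by (simp add: field_simps power2_eq_square)
  also have "x^2 / (1 + x) \<le> x^2 / 1" using x by (intro divide_left_mono) auto
  finally show "exp (- x) - (1 - x) \<le> x^2" by simp
qed

lemma powr_inv_le_iff: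
  fixes m v l :: real
  assumes m: "0 \<le> m" and v: "0 < v" and l: "l > 0"
  shows "m powr (1/l) \<le> v \<longleftrightarrow> m \<le> v powr l"
proof
  assume "m powr (1/l) \<le> v"
  then have "(m powr (1/l)) powr l \<le> v powr l" using l m by (intro powr_mono2) auto
  then show "m \<le> v powr l" using l m by (simp add: powr_powr)
next
  assume "m \<le> v powr l"
  then have "m powr (1/l) \<le> (v powr l) powr (1/l)" using l m by (intro powr_mono2) auto
  then show "m powr (1/l) \<le> v" using l v by (simp add: powr_powr)
qed

locale blocks = setting +
  fixes J1 J2 :: "nat set"
  assumes J1: "J1 \<subseteq> {1..d}" "J1 \<noteq> {}" and J2: "J2 \<subseteq> {1..d}" "J2 \<noteq> {}"
    and disj: "J1 \<inter> J2 = {}"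
begin

lemma finJ: "finite J1" "finite J2" using J1 J2 finite_subset by auto

lemma Mx_U: "Mx P X J \<omega> = Max ((\<lambda>i. U i \<omega>) ` J)"
  unfolding Mx_def U_def by simp

lemma Mx_le_iff: "finite J \<Longrightarrow> J \<noteq> {} \<Longrightarrow> Mx P X J \<omega> \<le> v \<longleftrightarrow> (\<forall>i\<in>J. U i \<omega> \<le> v)"
  unfolding Mx_U by simp

lemma Mx_bounds: assumes "finite J" "J \<noteq> {}" shows "0 \<le> Mx P X J \<omega>" "Mx P X J \<omega> \<le> 1"
proof -
  obtain i where i: "i \<in> J" using assms by auto
  have "U i \<omega> \<le> Mx P X J \<omega>" unfolding Mx_U using assms i by (intro Max_ge) auto
  then show "0 \<le> Mx P X J \<omega>" using U_bounds[of i \<omega>] by simp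
  show "Mx P X J \<omega> \<le> 1" using Mx_le_iff[OF assms] U_bounds by simp
qed

lemma Mx_meas: assumes "J \<subseteq> {1..d}" shows "(\<lambda>\<omega>. Mx P X J \<omega>) \<in> borel_measurable P"
proof -
  have f: "finite J" using assms finite_subset by auto
  show ?thesis unfolding Mx_U using assms
    by (intro borel_measurable_Max[OF f]) auto
qed

lemma Mx1_meas[measurable]: "(\<lambda>\<omega>. Mx P X J1 \<omega>) \<in> borel_measurable P" using Mx_meas J1 by auto
lemma Mx2_meas[measurable]: "(\<lambda>\<omega>. Mx P X J2 \<omega>) \<in> borel_measurable P" using Mx_meas J2 by auto

definition Hw where "Hw v v' = (\<lambda>i. if i \<in> J1 then v else if i \<in> J2 then v' else 1)"
definition av where "av \<alpha> \<beta> = (\<lambda>i. if i \<in> J1 then \<alpha> else if i \<in> J2 then \<beta> else (0::real))"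
definition H where "H v v' = measure P {\<omega> \<in> space P. Mx P X J1 \<omega> \<le> v \<and> Mx P X J2 \<omega> \<le> v'}"
definition Th where "Th \<alpha> \<beta> = Theta (av \<alpha> \<beta>)"

lemma H_C: "H v v' = C (Hw v v')"
proof -
  have "{\<omega> \<in> space P. Mx P X J1 \<omega> \<le> v \<and> Mx P X J2 \<omega> \<le> v'} =
        {\<omega> \<in> space P. \<forall>i\<in>{1..d}. U i \<omega> \<le> Hw v v' i}"
    using J1 J2 finJ U_bounds disj unfolding Hw_def Mx_le_iff[OF finJ(1) J1(2)] Mx_le_iff[OF finJ(2) J2(2)]
    by auto
  then show ?thesis unfolding H_def C_def by simp
qed

lemma av_nn: "\<alpha> \<ge> 0 \<Longrightarrow> \<beta> \<ge> 0 \<Longrightarrow> \<forall>i\<in>{1..d}. av \<alpha> \<beta> i \<ge> 0"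
  unfolding av_def by auto

lemma H_exp: assumes "\<alpha> \<ge> 0" "\<beta> \<ge> 0" "s > 0"
  shows "H (exp (- s * \<alpha>)) (exp (- s * \<beta>)) = exp (- s * Th \<alpha> \<beta>)"
proof -
  have "Hw (exp (- s * \<alpha>)) (exp (- s * \<beta>)) = (\<lambda>i. exp (- s * av \<alpha> \<beta> i))"
    unfolding Hw_def av_def by (auto simp: fun_eq_iff)
  then show ?thesis using Cexp_formula[OF av_nn[OF assms(1,2)] assms(3)]
    unfolding H_C Cexp_def Th_def by simp
qed

lemma H_single1: "measure P {\<omega> \<in> space P. Mx P X J1 \<omega> \<le> v} = H v 1"
  unfolding H_def using Mx_bounds[OF finJ(2) J2(2)] by simp

lemma H_single2: "measure P {\<omega> \<in> space P. Mx P X J2 \<omega> \<le> v} = H 1 v"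
  unfolding H_def using Mx_bounds[OF finJ(1) J1(2)] by simp

lemma Th_nn: assumes "\<alpha> \<ge> 0" "\<beta> \<ge> 0" shows "Th \<alpha> \<beta> \<ge> 0"
proof -
  have "Cexp (av \<alpha> \<beta>) 1 > 0" using Cexp_pos[OF av_nn[OF assms]] by simp
  moreover have "Cexp (av \<alpha> \<beta>) 1 \<le> 1" unfolding Cexp_def by (rule C_le1)
  ultimately show ?thesis unfolding Th_def Theta_def by simp
qed

lemma Th_ge1: assumes "\<alpha> \<ge> 0" "\<beta> \<ge> 0" shows "Th \<alpha> \<beta> \<ge> \<alpha>"
proof -
  obtain i where i: "i \<in> J1" using J1 by auto
  have id: "i \<in> {1..d}" using i J1 by auto
  have "H (exp (- 1 * \<alpha>)) (exp (- 1 * \<beta>)) \<le> measure P {\<omega> \<in> space P. U i \<omega> \<le> exp (- \<alpha>)}"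
    unfolding H_def using i Mx_le_iff[OF finJ(1) J1(2)] U_sets[OF id]
    by (intro finite_measure_mono) auto
  also have "\<dots> = exp (- \<alpha>)" using measure_U[OF id] assms by simp
  finally have "exp (- Th \<alpha> \<beta>) \<le> exp (- \<alpha>)" using H_exp[OF assms, of 1] by simp
  then show ?thesis by simp
qed

lemma Th_ge2: assumes "\<alpha> \<ge> 0" "\<beta> \<ge> 0" shows "Th \<alpha> \<beta> \<ge> \<beta>"
proof -
  obtain i where i: "i \<in> J2" using J2 by auto
  have id: "i \<in> {1..d}" using i J2 by auto
  have "H (exp (- 1 * \<alpha>)) (exp (- 1 * \<beta>)) \<le> measure P {\<omega> \<in> space P. U i \<omega> \<le> exp (- \<beta>)}"
    unfolding H_def using i Mx_le_iff[OF finJ(2) J2(2)] U_sets[OF id]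
    by (intro finite_measure_mono) auto
  also have "\<dots> = exp (- \<beta>)" using measure_U[OF id] assms by simp
  finally have "exp (- Th \<alpha> \<beta>) \<le> exp (- \<beta>)" using H_exp[OF assms, of 1] by simp
  then show ?thesis by simp
qed

lemma Th_scale: assumes "c > 0" "\<alpha> \<ge> 0" "\<beta> \<ge> 0" shows "Th (c * \<alpha>) (c * \<beta>) = c * Th \<alpha> \<beta>"
proof -
  have "exp (- c * Th \<alpha> \<beta>) = H (exp (- c * \<alpha>)) (exp (- c * \<beta>))"
    using H_exp[OF assms(2,3,1)] by simp
  also have "\<dots> = H (exp (- 1 * (c * \<alpha>))) (exp (- 1 * (c * \<beta>)))" by simp
  also have "\<dots> = exp (- 1 * Th (c * \<alpha>) (c * \<beta>))"
    using assms by (intro H_exp) auto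
  finally show ?thesis by simp
qed

lemma H_lip: assumes "0 < v" "v \<le> 1" "0 < v'" "v' \<le> 1" "0 < u" "u \<le> 1" "0 < u'" "u' \<le> 1"
  shows "\<bar>H v v' - H u u'\<bar> \<le> real d * (\<bar>v - u\<bar> + \<bar>v' - u'\<bar>)"
proof -
  have w: "\<forall>i\<in>{1..d}. 0 < Hw v v' i \<and> Hw v v' i \<le> 1" using assms unfolding Hw_def by auto
  have w': "\<forall>i\<in>{1..d}. 0 < Hw u u' i \<and> Hw u u' i \<le> 1" using assms unfolding Hw_def by auto
  have "\<bar>H v v' - H u u'\<bar> \<le> (\<Sum>i\<in>{1..d}. \<bar>Hw v v' i - Hw u u' i\<bar>)"
    unfolding H_C using Lip_abs[OF w w'] .
  also have "\<dots> \<le> (\<Sum>i\<in>{1..d}. \<bar>v - u\<bar> + \<bar>v' - u'\<bar>)"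
    by (intro sum_mono) (auto simp: Hw_def)
  finally show ?thesis by simp
qed

end

context blocks begin

lemma lim_H: assumes a: "\<alpha> \<ge> 0" and b: "\<beta> \<ge> 0"
  shows "((\<lambda>t. t * (1 - H (1 - \<alpha>/t) (1 - \<beta>/t))) \<longlongrightarrow> Th \<alpha> \<beta>) at_top"
proof (rule tendsto_bound)
  define \<theta> where "\<theta> = Th \<alpha> \<beta>"
  have th: "\<theta> \<ge> 0" unfolding \<theta>_def using Th_nn[OF a b] .
  define K where "K = real d * (\<alpha>^2 + \<beta>^2) + \<theta>^2"
  show "\<forall>\<^sub>F t in at_top. \<bar>t * (1 - H (1 - \<alpha>/t) (1 - \<beta>/t)) - Th \<alpha> \<beta>\<bar> \<le> K / t"
    using eventually_ge_at_top[of "\<alpha> + \<beta> + 1"]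
  proof eventually_elim
    case (elim t)
    have t: "t > 0" using elim a b by linarith
    define x where "x = \<alpha> / t"
    define y where "y = \<beta> / t"
    define z where "z = \<theta> / t"
    have x: "0 \<le> x" "x < 1" unfolding x_def using a b elim t by (auto simp: field_simps)
    have y: "0 \<le> y" "y < 1" unfolding y_def using a b elim t by (auto simp: field_simps)
    have z: "0 \<le> z" unfolding z_def using th t by simp
    have e: "H (exp (- (1/t) * \<alpha>)) (exp (- (1/t) * \<beta>)) = exp (- (1/t) * \<theta>)"
      unfolding \<theta>_def using a b t by (intro H_exp) auto
    then have e: "H (exp (- x)) (exp (- y)) = exp (- z)" unfolding x_def y_def z_def by simp
    define D where "D = H (1 - x) (1 - y) - exp (- z)"
    have "\<bar>D\<bar> \<le> real d * (\<bar>(1 - x) - exp (- x)\<bar> + \<bar>(1 - y) - exp (- y)\<bar>)"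
      unfolding D_def e[symmetric] using x y by (intro H_lip) auto
    also have "\<dots> \<le> real d * (x^2 + y^2)"
      using exp_quad_bound[OF x(1)] exp_quad_bound[OF y(1)] by (intro mult_left_mono) auto
    finally have D: "\<bar>D\<bar> \<le> real d * (x^2 + y^2)" .
    define E where "E = exp (- z) - (1 - z)"
    have E: "0 \<le> E" "E \<le> z^2" unfolding E_def using exp_quad_bound[OF z] by auto
    have tz: "t * z = \<theta>" unfolding z_def using t by simp
    have eq: "t * (1 - H (1 - x) (1 - y)) - \<theta> = - (t * D) - t * E"
      unfolding D_def E_def using tz by (simp add: algebra_simps)
    have tD: "\<bar>t * D\<bar> = t * \<bar>D\<bar>" using t by (simp add: abs_mult)
    have "\<bar>- (t * D) - t * E\<bar> \<le> t * \<bar>D\<bar> + t * E" using t E tD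
      by (smt (verit) mult_nonneg_nonneg)
    also have "\<dots> \<le> t * (real d * (x^2 + y^2)) + t * z^2"
      using D E t by (intro add_mono mult_left_mono) auto
    also have "\<dots> = K / t" unfolding K_def x_def y_def z_def using t
      by (simp add: field_simps power2_eq_square)
    finally show ?case using eq unfolding x_def y_def \<theta>_def by simp
  qed
  show "((\<lambda>t. K / t) \<longlongrightarrow> 0) at_top"
    by (intro tendsto_divide_0[OF tendsto_const] filterlim_at_top_imp_at_infinity filterlim_ident)
qed

lemma sets_le1[measurable]: "{\<omega> \<in> space P. Mx P X J1 \<omega> \<le> a} \<in> sets P" by measurable
lemma sets_le2[measurable]: "{\<omega> \<in> space P. Mx P X J2 \<omega> \<le> a} \<in> sets P" by measurable

lemma joint: "measure P ({\<omega> \<in> space P. Mx P X J1 \<omega> > a} \<inter> {\<omega> \<in> space P. Mx P X J2 \<omega> > b})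
   = 1 - H a 1 - H 1 b + H a b"
proof -
  define A where "A = {\<omega> \<in> space P. Mx P X J1 \<omega> \<le> a}"
  define B where "B = {\<omega> \<in> space P. Mx P X J2 \<omega> \<le> b}"
  have As: "A \<in> sets P" and Bs: "B \<in> sets P" unfolding A_def B_def by measurable
  have "{\<omega> \<in> space P. Mx P X J1 \<omega> > a} \<inter> {\<omega> \<in> space P. Mx P X J2 \<omega> > b} = space P - (A \<union> B)"
    unfolding A_def B_def by auto
  then have "measure P ({\<omega> \<in> space P. Mx P X J1 \<omega> > a} \<inter> {\<omega> \<in> space P. Mx P X J2 \<omega> > b})
      = 1 - measure P (A \<union> B)" using prob_compl[of "A \<union> B"] As Bs by simp
  also have "measure P (A \<union> B) = measure P A + measure P (B - A)"
    using As Bs by (rule finite_measure_Union')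
  also have "measure P (B - A) = measure P B - measure P (B \<inter> A)"
    using Bs As by (rule finite_measure_Diff')
  also have "measure P A = H a 1" unfolding A_def by (rule H_single1)
  also have "measure P B = H 1 b" unfolding B_def by (rule H_single2)
  also have "B \<inter> A = {\<omega> \<in> space P. Mx P X J1 \<omega> \<le> a \<and> Mx P X J2 \<omega> \<le> b}"
    unfolding A_def B_def by auto
  finally show ?thesis unfolding H_def by simp
qed

lemma single2: "measure P {\<omega> \<in> space P. Mx P X J2 \<omega> > b} = 1 - H 1 b"
proof -
  have "{\<omega> \<in> space P. Mx P X J2 \<omega> > b} = space P - {\<omega> \<in> space P. Mx P X J2 \<omega> \<le> b}" by auto
  then show ?thesis using prob_compl[OF sets_le2[of b]] H_single2[of b] by simp
qed

lemma cond_lim: assumes l: "l1 > 0" "l2 > 0"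
  shows "((\<lambda>t. cond_prob P {\<omega> \<in> space P. Mx P X J1 \<omega> > 1 - l1/t}
                          {\<omega> \<in> space P. Mx P X J2 \<omega> > 1 - l2/t} * (l2 * Th 0 1))
          \<longlongrightarrow> Th l1 0 + Th 0 l2 - Th l1 l2) at_top"
proof -
  define L where "L = Th l1 0 + Th 0 l2 - Th l1 l2"
  have T2: "Th 0 l2 = l2 * Th 0 1" using Th_scale[of l2 0 1] l by simp
  have pos: "Th 0 l2 > 0" using Th_ge2[of 0 l2] l by simp
  have limA: "((\<lambda>t. t * (1 - H (1 - l1/t) 1)) \<longlongrightarrow> Th l1 0) at_top"
    using lim_H[of l1 0] l by simp
  have limB: "((\<lambda>t. t * (1 - H 1 (1 - l2/t))) \<longlongrightarrow> Th 0 l2) at_top"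
    using lim_H[of 0 l2] l by simp
  have limAB: "((\<lambda>t. t * (1 - H (1 - l1/t) (1 - l2/t))) \<longlongrightarrow> Th l1 l2) at_top"
    using lim_H[of l1 l2] l by simp
  define N where "N t = t * (1 - H (1 - l1/t) 1) + t * (1 - H 1 (1 - l2/t)) - t * (1 - H (1 - l1/t) (1 - l2/t))" for t
  have limN: "(N \<longlongrightarrow> L) at_top"
    unfolding N_def L_def by (intro tendsto_add tendsto_diff limA limB limAB)
  have lim: "((\<lambda>t. N t / (t * (1 - H 1 (1 - l2/t))) * Th 0 l2) \<longlongrightarrow> L / Th 0 l2 * Th 0 l2) at_top"
    using pos by (intro tendsto_mult tendsto_divide limN limB tendsto_const) auto
  have lim': "((\<lambda>t. N t / (t * (1 - H 1 (1 - l2/t))) * Th 0 l2) \<longlongrightarrow> L) at_top"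
    using lim pos by simp
  show ?thesis unfolding L_def[symmetric]
  proof (rule tendsto_cong[THEN iffD1, OF _ lim'])
    show "\<forall>\<^sub>F t in at_top. N t / (t * (1 - H 1 (1 - l2 / t))) * Th 0 l2 =
        cond_prob P {\<omega> \<in> space P. 1 - l1 / t < Mx P X J1 \<omega>} {\<omega> \<in> space P. 1 - l2 / t < Mx P X J2 \<omega>} * (l2 * Th 0 1)"
      using eventually_gt_at_top[of 0]
    proof eventually_elim
      case (elim t)
      have "N t = t * (1 - H (1 - l1/t) 1 - H 1 (1 - l2/t) + H (1 - l1/t) (1 - l2/t))"
        unfolding N_def by (simp add: algebra_simps)
      then have "N t / (t * (1 - H 1 (1 - l2/t))) =
          (1 - H (1 - l1/t) 1 - H 1 (1 - l2/t) + H (1 - l1/t) (1 - l2/t)) / (1 - H 1 (1 - l2/t))"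
        using elim by simp
      also have "\<dots> = cond_prob P {\<omega> \<in> space P. 1 - l1 / t < Mx P X J1 \<omega>} {\<omega> \<in> space P. 1 - l2 / t < Mx P X J2 \<omega>}"
        unfolding cond_prob_def joint single2 by simp
      finally show ?case using T2 by simp
    qed
  qed
qed

lemma E1: "(\<integral>\<omega>. Mx P X J1 \<omega> \<partial>P) = Th 1 0 / (Th 1 0 + 1)"
proof (rule expect_cdf[OF ps Mx1_meas])
  show "0 \<le> Mx P X J1 \<omega> \<and> Mx P X J1 \<omega> \<le> 1" for \<omega> using Mx_bounds[OF finJ(1) J1(2)] by auto
  show "Th 1 0 > 0" using Th_ge1[of 1 0] by simp
  fix v :: real assume v: "0 < v" "v < 1"
  define s where "s = - ln v"
  have s: "s > 0" unfolding s_def using v by simp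
  have "measure P {\<omega> \<in> space P. Mx P X J1 \<omega> \<le> v} = H (exp (- s * 1)) (exp (- s * 0))"
    unfolding H_single1 s_def using v by simp
  also have "\<dots> = exp (- s * Th 1 0)" using s by (intro H_exp) auto
  also have "\<dots> = v powr Th 1 0" unfolding s_def using v by (simp add: powr_def)
  finally show "measure P {\<omega> \<in> space P. Mx P X J1 \<omega> \<le> v} = v powr Th 1 0" .
qed

lemma E2: "(\<integral>\<omega>. Mx P X J2 \<omega> \<partial>P) = Th 0 1 / (Th 0 1 + 1)"
proof (rule expect_cdf[OF ps Mx2_meas])
  show "0 \<le> Mx P X J2 \<omega> \<and> Mx P X J2 \<omega> \<le> 1" for \<omega> using Mx_bounds[OF finJ(2) J2(2)] by auto
  show "Th 0 1 > 0" using Th_ge2[of 0 1] by simp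
  fix v :: real assume v: "0 < v" "v < 1"
  define s where "s = - ln v"
  have s: "s > 0" unfolding s_def using v by simp
  have "measure P {\<omega> \<in> space P. Mx P X J2 \<omega> \<le> v} = H (exp (- s * 0)) (exp (- s * 1))"
    unfolding H_single2 s_def using v by simp
  also have "\<dots> = exp (- s * Th 0 1)" using s by (intro H_exp) auto
  also have "\<dots> = v powr Th 0 1" unfolding s_def using v by (simp add: powr_def)
  finally show "measure P {\<omega> \<in> space P. Mx P X J2 \<omega> \<le> v} = v powr Th 0 1" .
qed

lemma E12: assumes l: "l1 > 0" "l2 > 0"
  shows "(\<integral>\<omega>. max (Mx P X J1 \<omega> powr (1/l1)) (Mx P X J2 \<omega> powr (1/l2)) \<partial>P) = Th l1 l2 / (Th l1 l2 + 1)"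
proof (rule expect_cdf[OF ps])
  show "(\<lambda>\<omega>. max (Mx P X J1 \<omega> powr (1/l1)) (Mx P X J2 \<omega> powr (1/l2))) \<in> borel_measurable P"
    by measurable
  show "0 \<le> max (Mx P X J1 \<omega> powr (1/l1)) (Mx P X J2 \<omega> powr (1/l2)) \<and>
        max (Mx P X J1 \<omega> powr (1/l1)) (Mx P X J2 \<omega> powr (1/l2)) \<le> 1" for \<omega>
    using Mx_bounds[OF finJ(1) J1(2), of \<omega>] Mx_bounds[OF finJ(2) J2(2), of \<omega>] l
      powr_le1[of "1/l1" "Mx P X J1 \<omega>"] powr_le1[of "1/l2" "Mx P X J2 \<omega>"]
      by (auto simp: le_max_iff_disj)
  show "Th l1 l2 > 0" using Th_ge1[of l1 l2] l by simp
  fix v :: real assume v: "0 < v" "v < 1"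
  define s where "s = - ln v"
  have s: "s > 0" unfolding s_def using v by simp
  have "{\<omega> \<in> space P. max (Mx P X J1 \<omega> powr (1/l1)) (Mx P X J2 \<omega> powr (1/l2)) \<le> v} =
        {\<omega> \<in> space P. Mx P X J1 \<omega> \<le> v powr l1 \<and> Mx P X J2 \<omega> \<le> v powr l2}"
    using powr_inv_le_iff[OF Mx_bounds(1)[OF finJ(1) J1(2)] v(1) l(1)]
      powr_inv_le_iff[OF Mx_bounds(1)[OF finJ(2) J2(2)] v(1) l(2)] by auto
  then have "measure P {\<omega> \<in> space P. max (Mx P X J1 \<omega> powr (1/l1)) (Mx P X J2 \<omega> powr (1/l2)) \<le> v}
      = H (v powr l1) (v powr l2)" unfolding H_def by simp
  also have "\<dots> = H (exp (- s * l1)) (exp (- s * l2))"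
    unfolding s_def using v by (simp add: powr_def mult.commute)
  also have "\<dots> = exp (- s * Th l1 l2)" using s l by (intro H_exp) auto
  also have "\<dots> = v powr Th l1 l2" unfolding s_def using v by (simp add: powr_def)
  finally show "measure P {\<omega> \<in> space P. max (Mx P X J1 \<omega> powr (1/l1)) (Mx P X J2 \<omega> powr (1/l2)) \<le> v}
      = v powr Th l1 l2" .
qed

end

theorem mainTheorem6:
  fixes P :: "'a measure" and X :: "nat \<Rightarrow> 'a \<Rightarrow> real"
    and d p :: nat and B :: "nat \<Rightarrow> nat set"
    and \<sigma> :: "nat \<Rightarrow> real" and \<eta> :: real
    and j j' :: nat and lj lj' :: real
  assumes "prob_space P"
    and "d \<ge> 1"
    and rv: "\<And>i. i \<in> {1..d} \<Longrightarrow> X i \<in> borel_measurable P"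
    and sigma: "\<And>i. i \<in> {1..d} \<Longrightarrow> \<sigma> i > 0"
    and eta: "0 < \<eta>" "\<eta> \<le> 1"
    and marg: "\<And>i t. i \<in> {1..d} \<Longrightarrow> t > 0 \<Longrightarrow>
                  marg_cdf P X i t = exp (- \<sigma> i * t powr (- 1 / \<eta>))"
    and homog: "\<And>t s. (\<forall>i\<in>{1..d}. t i > 0) \<Longrightarrow> s > 0 \<Longrightarrow>
                  ell P X d (\<lambda>i. s * t i) = ereal (s powr (- 1 / \<eta>)) * ell P X d t"
    and p: "1 \<le> p" "p \<le> d"
    and blocks_ne: "\<And>k. k \<in> {1..p} \<Longrightarrow> B k \<noteq> {}"
    and blocks_interval: "\<And>k. k \<in> {1..p} \<Longrightarrow> \<exists>a b. B k = {a..b}"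
    and blocks_ordered: "\<And>k k' x y. k \<in> {1..p} \<Longrightarrow> k' \<in> {1..p} \<Longrightarrow> k < k' \<Longrightarrow>
                  x \<in> B k \<Longrightarrow> y \<in> B k' \<Longrightarrow> x < y"
    and blocks_cover: "(\<Union>k\<in>{1..p}. B k) = {1..d}"
    and jj: "1 \<le> j" "j < j'" "j' \<le> p"
    and lam: "lj > 0" "lj' > 0"
  shows
    "((\<lambda>t. cond_prob P {\<omega> \<in> space P. Mx P X (B j) \<omega> > 1 - lj / t}
                       {\<omega> \<in> space P. Mx P X (B j') \<omega> > 1 - lj' / t}
            * lj' * ext_dep P X B (\<lambda>_. 1) {j'})
       \<longlongrightarrow> lj * ext_dep P X B (\<lambda>_. 1) {j} + lj' * ext_dep P X B (\<lambda>_. 1) {j'}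
           - ext_dep P X B (\<lambda>k. if k = j then 1 / lj else 1 / lj') {j, j'}) at_top
     \<and> ((\<lambda>t. cond_prob P {\<omega> \<in> space P. Mx P X (B j') \<omega> > 1 - lj' / t}
                       {\<omega> \<in> space P. Mx P X (B j) \<omega> > 1 - lj / t}
            * lj * ext_dep P X B (\<lambda>_. 1) {j})
       \<longlongrightarrow> lj * ext_dep P X B (\<lambda>_. 1) {j} + lj' * ext_dep P X B (\<lambda>_. 1) {j'}
           - ext_dep P X B (\<lambda>k. if k = j then 1 / lj else 1 / lj') {j, j'}) at_top"
proof -
  note assms_all = assms
  interpret S: setting P X d \<sigma> \<eta>
    by (rule setting.intro[OF assms(1,2) rv sigma eta(1) eta(2) marg homog])
  have subB: "B k \<subseteq> {1..d}" if "k \<in> {1..p}" for k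
    using blocks_cover that by blast
  have jin: "j \<in> {1..p}" "j' \<in> {1..p}" using jj by auto
  have nin: "x \<notin> B j'" if "x \<in> B j" for x
    using blocks_ordered[OF jin jj(2) that, of x] by auto
  have disj: "B j \<inter> B j' = {}" using nin by blast
  have disj': "B j' \<inter> B j = {}" using disj by blast
  interpret B1: blocks P X d \<sigma> \<eta> "B j" "B j'"
    by (intro blocks.intro blocks_axioms.intro S.setting_axioms subB jin blocks_ne disj)
  interpret B2: blocks P X d \<sigma> \<eta> "B j'" "B j"
    by (intro blocks.intro blocks_axioms.intro S.setting_axioms subB jin blocks_ne disj')
  have jne: "j \<noteq> j'" using jj by simp
  have Mxnn: "0 \<le> Mx P X (B k) \<omega>" if "k \<in> {1..p}" for k \<omega>
  proof -
    have "finite (B k)" using subB[OF that] finite_subset by auto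
    then show ?thesis using B1.Mx_bounds(1) blocks_ne[OF that] by blast
  qed
  have extval: "(let e = I in e / (1 - e)) = \<theta>" if "I = \<theta> / (\<theta> + 1)" "\<theta> \<ge> 0" for I \<theta> :: real
  proof -
    have p: "\<theta> + 1 > 0" using that by simp
    have "1 - I = 1 / (\<theta> + 1)" using that p by (simp add: field_simps)
    then show ?thesis using that p by (simp add: Let_def)
  qed
  have int1: "(\<lambda>\<omega>. Max ((\<lambda>k. Mx P X (B k) \<omega> powr (1::real)) ` {j})) = (\<lambda>\<omega>. Mx P X (B j) \<omega>)"
    using Mxnn[OF jin(1)] by (auto simp: fun_eq_iff)
  have int2: "(\<lambda>\<omega>. Max ((\<lambda>k. Mx P X (B k) \<omega> powr (1::real)) ` {j'})) = (\<lambda>\<omega>. Mx P X (B j') \<omega>)"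
    using Mxnn[OF jin(2)] by (auto simp: fun_eq_iff)
  have int12: "(\<lambda>\<omega>. Max ((\<lambda>k. Mx P X (B k) \<omega> powr (if k = j then 1 / lj else 1 / lj')) ` {j, j'}))
      = (\<lambda>\<omega>. max (Mx P X (B j) \<omega> powr (1/lj)) (Mx P X (B j') \<omega> powr (1/lj')))"
    using jne by (auto simp: fun_eq_iff)
  have int12': "(\<lambda>\<omega>. max (Mx P X (B j) \<omega> powr (1/lj)) (Mx P X (B j') \<omega> powr (1/lj')))
      = (\<lambda>\<omega>. max (Mx P X (B j') \<omega> powr (1/lj')) (Mx P X (B j) \<omega> powr (1/lj)))"
    by (auto simp: fun_eq_iff max.commute)
  have nn1: "B1.Th 1 0 \<ge> 0" "B1.Th 0 1 \<ge> 0" "B1.Th lj lj' \<ge> 0" using B1.Th_nn lam by auto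
  have nn2: "B2.Th 1 0 \<ge> 0" "B2.Th 0 1 \<ge> 0" "B2.Th lj' lj \<ge> 0" using B2.Th_nn lam by auto
  have ej_1: "ext_dep P X B (\<lambda>_. 1) {j} = B1.Th 1 0"
    unfolding ext_dep_def int1 by (rule extval[OF B1.E1 nn1(1)])
  have ej_2: "ext_dep P X B (\<lambda>_. 1) {j} = B2.Th 0 1"
    unfolding ext_dep_def int1 by (rule extval[OF B2.E2 nn2(2)])
  have ej'_1: "ext_dep P X B (\<lambda>_. 1) {j'} = B1.Th 0 1"
    unfolding ext_dep_def int2 by (rule extval[OF B1.E2 nn1(2)])
  have ej'_2: "ext_dep P X B (\<lambda>_. 1) {j'} = B2.Th 1 0"
    unfolding ext_dep_def int2 by (rule extval[OF B2.E1 nn2(1)])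
  have e12_1: "ext_dep P X B (\<lambda>k. if k = j then 1 / lj else 1 / lj') {j, j'} = B1.Th lj lj'"
    unfolding ext_dep_def int12 by (rule extval[OF B1.E12[OF lam] nn1(3)])
  have e12_2: "ext_dep P X B (\<lambda>k. if k = j then 1 / lj else 1 / lj') {j, j'} = B2.Th lj' lj"
    unfolding ext_dep_def int12 int12' by (rule extval[OF B2.E12[OF lam(2,1)] nn2(3)])
  have s1: "B1.Th lj 0 = lj * B1.Th 1 0" using B1.Th_scale[of lj 1 0] lam by simp
  have s2: "B1.Th 0 lj' = lj' * B1.Th 0 1" using B1.Th_scale[of lj' 0 1] lam by simp
  have s3: "B2.Th lj' 0 = lj' * B2.Th 1 0" using B2.Th_scale[of lj' 1 0] lam by simp
  have s4: "B2.Th 0 lj = lj * B2.Th 0 1" using B2.Th_scale[of lj 0 1] lam by simp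
  note L1 = B1.cond_lim[OF lam]
  note L2 = B2.cond_lim[OF lam(2,1)]
  show ?thesis
  proof
    show "((\<lambda>t. cond_prob P {\<omega> \<in> space P. Mx P X (B j) \<omega> > 1 - lj / t}
                       {\<omega> \<in> space P. Mx P X (B j') \<omega> > 1 - lj' / t}
            * lj' * ext_dep P X B (\<lambda>_. 1) {j'})
       \<longlongrightarrow> lj * ext_dep P X B (\<lambda>_. 1) {j} + lj' * ext_dep P X B (\<lambda>_. 1) {j'}
           - ext_dep P X B (\<lambda>k. if k = j then 1 / lj else 1 / lj') {j, j'}) at_top"
      using L1 unfolding ej_1 ej'_1 e12_1 s1 s2 by (simp add: mult.assoc)
    show "((\<lambda>t. cond_prob P {\<omega> \<in> space P. Mx P X (B j') \<omega> > 1 - lj' / t}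
                       {\<omega> \<in> space P. Mx P X (B j) \<omega> > 1 - lj / t}
            * lj * ext_dep P X B (\<lambda>_. 1) {j})
       \<longlongrightarrow> lj * ext_dep P X B (\<lambda>_. 1) {j} + lj' * ext_dep P X B (\<lambda>_. 1) {j'}
           - ext_dep P X B (\<lambda>k. if k = j then 1 / lj else 1 / lj') {j, j'}) at_top"
      using L2 unfolding ej_2 ej'_2 e12_2 s3 s4 by (simp add: mult.assoc add.commute)
  qed
qed

end
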